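(* For all $a,b\in[0,j_{3/2,1}]$, $$|b\sin a-a\sin b|\ge|a-b|\sqrt{(a\cos a-\sin a)(b\cos b-\sin b)},$$ where $j_{3/2,1}=4.4934\ldots$ is the first positive root of $\sin x=x\cos x$. *)

theory Defs
  imports "HOL-Analysis.Analysis"
begin

definition j32 :: real where
  "j32 = Inf {x::real. 0 < x \<and> sin x = x * cos x}"

end

theory Submission
  imports Defs
begin
lemma h0_nonneg: fixes y x :: real assumes "0 \<le> y" "y \<le> pi" shows "sin y - y * cos y \<ge> 0"
proof -
  have "(\<lambda>y. sin y - y * cos y) 0 \<le> (\<lambda>y. sin y - y * cos y) y"
    apply (rule DERIV_nonneg_imp_nondecreasing[OF assms(1)])
    subgoal for x
      apply (rule exI[of _ "x * sin x"])
      apply (intro conjI)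
      apply (auto intro!: derivative_eq_intros simp: algebra_simps)[1]
      using assms sin_ge_zero[of x] by auto
    done
  thus ?thesis by simp
qed

lemma R3_nonneg: fixes y x :: real assumes "0 \<le> y" "y \<le> pi" shows "3 * sin y - y * cos y \<ge> 0"
  using h0_nonneg[OF assms] sin_ge_zero[OF assms] by linarith

lemma R2_nonneg: fixes y x :: real assumes "0 \<le> y" "y \<le> pi" shows "4 - 4 * cos y - y * sin y \<ge> 0"
proof -
  have "(\<lambda>y. 4 - 4 * cos y - y * sin y) 0 \<le> (\<lambda>y. 4 - 4 * cos y - y * sin y) y"
    apply (rule DERIV_nonneg_imp_nondecreasing[OF assms(1)])
    subgoal for x
      apply (rule exI[of _ "3 * sin x - x * cos x"])
      apply (intro conjI)
      apply (auto intro!: derivative_eq_intros simp: algebra_simps)[1]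
      using R3_nonneg[of x] assms by auto
    done
  thus ?thesis by simp
qed

lemma R1_nonneg: fixes y x :: real assumes "0 \<le> y" "y \<le> pi" shows "4 * y - 5 * sin y + y * cos y \<ge> 0"
proof -
  have "(\<lambda>y. 4 * y - 5 * sin y + y * cos y) 0 \<le> (\<lambda>y. 4 * y - 5 * sin y + y * cos y) y"
    apply (rule DERIV_nonneg_imp_nondecreasing[OF assms(1)])
    subgoal for x
      apply (rule exI[of _ "4 - 4 * cos x - x * sin x"])
      apply (intro conjI)
      apply (auto intro!: derivative_eq_intros simp: algebra_simps)[1]
      using R2_nonneg[of x] assms by auto
    done
  thus ?thesis by simp
qed

lemma R_nonneg_pi: fixes y x :: real assumes "0 \<le> y" "y \<le> pi" shows "2 * y^2 - 6 + 6 * cos y + y * sin y \<ge> 0"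
proof -
  have "(\<lambda>y. 2 * y^2 - 6 + 6 * cos y + y * sin y) 0 \<le> (\<lambda>y. 2 * y^2 - 6 + 6 * cos y + y * sin y) y"
    apply (rule DERIV_nonneg_imp_nondecreasing[OF assms(1)])
    subgoal for x
      apply (rule exI[of _ "4 * x - 5 * sin x + x * cos x"])
      apply (intro conjI)
      apply (auto intro!: derivative_eq_intros simp: algebra_simps)[1]
      using R1_nonneg[of x] assms by auto
    done
  thus ?thesis by simp
qed

lemma R_nonneg: fixes y x :: real assumes "0 \<le> y" shows "2 * y^2 - 6 + 6 * cos y + y * sin y \<ge> 0"
proof (cases "y \<le> pi")
  case True thus ?thesis using R_nonneg_pi assms by auto
next
  case False
  hence y3: "y \<ge> 3" using pi_gt3 by linarith
  have "y * sin y \<ge> y * (-1)" using sin_ge_minus_one[of y] y3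
    by (intro mult_left_mono) auto
  moreover have "cos y \<ge> -1" by simp
  moreover have "2 * y^2 - 12 - y \<ge> 0"
  proof -
    have "y * y \<ge> 3 * y" using y3 by (intro mult_right_mono) auto
    thus ?thesis using y3 unfolding power2_eq_square by linarith
  qed
  ultimately show ?thesis by linarith
qed

lemma Q_nonneg: fixes y x :: real assumes "0 \<le> y"
  shows "y^4 - 6 * y^2 - 16 + (16 - 2 * y^2) * cos y + 16 * y * sin y \<ge> 0"
proof -
  let ?Q = "\<lambda>y. y^4 - 6 * y^2 - 16 + (16 - 2 * y^2) * cos y + 16 * y * sin y"
  have "?Q 0 \<le> ?Q y"
    apply (rule DERIV_nonneg_imp_nondecreasing[OF assms(1)])
    subgoal for x
      apply (rule exI[of _ "2 * x * (2 * x^2 - 6 + 6 * cos x + x * sin x)"])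
      apply (intro conjI)
      apply (auto intro!: derivative_eq_intros simp: algebra_simps power2_eq_square power3_eq_cube)[1]
      using R_nonneg[of x] assms by auto
    done
  thus ?thesis by simp
qed

lemma P_nonneg: fixes y x :: real assumes "0 \<le> x"
  shows "x^4 - x^2 * (sin x)^2 - 2 * (sin x)^2 + 4 * x * sin x * cos x - 2 * x^2 * (cos x)^2 \<ge> 0"
proof -
  have "(2*x)^4 - 6 * (2*x)^2 - 16 + (16 - 2 * (2*x)^2) * cos (2*x) + 16 * (2*x) * sin (2*x) \<ge> 0"
    using Q_nonneg[of "2*x"] assms by simp
  moreover have "(2*x)^4 - 6 * (2*x)^2 - 16 + (16 - 2 * (2*x)^2) * cos (2*x) + 16 * (2*x) * sin (2*x)
     = 16 * (x^4 - x^2 * (sin x)^2 - 2 * (sin x)^2 + 4 * x * sin x * cos x - 2 * x^2 * (cos x)^2)"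
  proof -
    have s: "(sin x)^2 = 1 - (cos x)^2" by (simp add: sin_squared_eq)
    show ?thesis unfolding sin_double cos_double s by (simp add: algebra_simps power2_eq_square power4_eq_xxxx)
  qed
  ultimately show ?thesis by simp
qed

lemma core:
  fixes a b :: real
  assumes ab: "0 < a" "a < b" and Hpos: "\<And>x. a \<le> x \<Longrightarrow> x \<le> b \<Longrightarrow> sin x - x * cos x > 0"
  shows "b * sin a - a * sin b \<ge> (b - a) * sqrt ((sin a - a * cos a) * (sin b - b * cos b))"
proof -
  define H where "H x = sin x - x * cos x" for x :: real
  define L where "L x = ln (H x / x^2)" for x
  define L1 where "L1 x = x * sin x / H x - 2 / x" for x
  define L2 where "L2 x = ((sin x + x * cos x) * H x - x^2 * (sin x)^2) / (H x)^2 + 2 / x^2" for x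
  have Hp: "H x > 0" if "x \<in> {a..b}" for x using Hpos that by (auto simp: H_def)
  have xp: "x > 0" if "x \<in> {a..b}" for x using that ab by auto
  have dH: "(H has_real_derivative x * sin x) (at x)" for x
    unfolding H_def by (auto intro!: derivative_eq_intros simp: algebra_simps)
  have d1: "((\<lambda>x. - L x) has_real_derivative - L1 x) (at x)" if "x \<in> {a..b}" for x
  proof -
    have "((\<lambda>x. - ln (H x / x^2)) has_real_derivative
      - ((x * sin x * x^2 - H x * (2 * x)) / (x^2)^2 / (H x / x^2))) (at x)"
      using Hp[OF that] xp[OF that]
      by (auto intro!: derivative_eq_intros dH simp: power2_eq_square)
    moreover have "(x * sin x * x^2 - H x * (2 * x)) / (x^2)^2 / (H x / x^2) = L1 x"
      using Hp[OF that] xp[OF that] unfolding L1_def by (simp add: field_simps power2_eq_square)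
    ultimately show ?thesis unfolding L_def by simp
  qed
  have d2: "((\<lambda>x. - L1 x) has_real_derivative - L2 x) (at x)" if "x \<in> {a..b}" for x
  proof -
    have "((\<lambda>x. - (x * sin x / H x - 2 / x)) has_real_derivative
      - (((sin x + x * cos x) * H x - x * sin x * (x * sin x)) / (H x * H x) + 2 / (x * x))) (at x)"
      using Hp[OF that] xp[OF that]
      by (auto intro!: derivative_eq_intros dH simp: power2_eq_square field_simps)
    moreover have "((sin x + x * cos x) * H x - x * sin x * (x * sin x)) / (H x * H x) + 2 / (x * x) = L2 x"
      unfolding L2_def by (simp add: power2_eq_square)
    ultimately show ?thesis unfolding L1_def by simp
  qed
  have d3: "- L2 x \<ge> 0" if "x \<in> {a..b}" for x
  proof -
    have P: "x^4 - x^2 * (sin x)^2 - 2 * (sin x)^2 + 4 * x * sin x * cos x - 2 * x^2 * (cos x)^2 \<ge> 0"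
      using P_nonneg[of x] xp[OF that] by simp
    have eq: "- L2 x = (x^4 - x^2 * (sin x)^2 - 2 * (sin x)^2 + 4 * x * sin x * cos x - 2 * x^2 * (cos x)^2) / (x^2 * (H x)^2)"
    proof -
      have s: "(sin x)^2 = 1 - (cos x)^2" by (simp add: sin_squared_eq)
      have "- L2 x = - ((x^2 * ((sin x + x * cos x) * H x - x^2 * (sin x)^2) + 2 * (H x)^2) / (x^2 * (H x)^2))"
        unfolding L2_def using Hp[OF that] xp[OF that] by (simp add: field_simps)
      also have "x^2 * ((sin x + x * cos x) * H x - x^2 * (sin x)^2) + 2 * (H x)^2
          = - (x^4 - x^2 * (sin x)^2 - 2 * (sin x)^2 + 4 * x * sin x * cos x - 2 * x^2 * (cos x)^2)"
        unfolding H_def using sin_cos_squared_add[of x] by algebra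
      finally show ?thesis by (metis minus_divide_left minus_minus)
    qed
    show ?thesis unfolding eq using P by simp
  qed
  have conv: "convex_on {a..b} (\<lambda>x. - L x)"
    by (rule f''_ge0_imp_convex[where f' = "\<lambda>x. - L1 x" and f'' = "\<lambda>x. - L2 x"])
       (use d1 d2 d3 in auto)
  define s where "s = (L b - L a) / (b - a)"
  define m where "m = (a + b) / 2"
  define c where "c = exp ((L a + L b) / 2)"
  have chord: "L x \<ge> L a + s * (x - a)" if "x \<in> {a..b}" for x
  proof -
    define t where "t = (x - a) / (b - a)"
    have t: "0 \<le> t" "t \<le> 1" using that ab by (auto simp: t_def field_simps)
    have tt: "t * (b - a) = x - a" using ab by (simp add: t_def)
    have "(1 - t) *\<^sub>R a + t *\<^sub>R b = a + t * (b - a)" by (simp add: algebra_simps)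
    hence "(1 - t) *\<^sub>R a + t *\<^sub>R b = x" using tt by simp
    hence "- L x \<le> (1 - t) * (- L a) + t * (- L b)"
      using convex_onD[OF conv t, of a b] ab by auto
    moreover have "s * (x - a) = t * (L b - L a)" by (simp add: s_def t_def ac_simps)
    moreover hence "L a + s * (x - a) = (1 - t) * L a + t * L b"
      by (simp add: algebra_simps)
    ultimately show ?thesis by linarith
  qed
  have gx: "H x / x^2 \<ge> c * (1 + s * (x - m))" if "x \<in> {a..b}" for x
  proof -
    have "H x / x^2 = exp (L x)" unfolding L_def using Hp[OF that] xp[OF that] by simp
    also have "exp (L x) \<ge> exp (L a + s * (x - a))" using chord[OF that] by simp
    also have "L a + s * (x - a) = (L a + L b)/2 + s * (x - m)"
      using ab by (simp add: s_def m_def field_simps)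
    also have "exp ((L a + L b)/2 + s * (x - m)) = c * exp (s * (x - m))"
      by (simp add: c_def exp_add)
    also have "c * exp (s * (x - m)) \<ge> c * (1 + s * (x - m))"
      unfolding c_def by (intro mult_left_mono exp_ge_add_one_self) auto
    finally show ?thesis .
  qed
  define \<psi> where "\<psi> x = - sin x / x - c * (x + s * (x - m)^2 / 2)" for x
  have "\<psi> a \<le> \<psi> b"
  proof (rule DERIV_nonneg_imp_nondecreasing[of a b \<psi>])
    show "a \<le> b" using ab by simp
  next
    fix x assume x: "a \<le> x" "x \<le> b"
    hence xin: "x \<in> {a..b}" by simp
    have "(\<psi> has_real_derivative H x / x^2 - c * (1 + s * (x - m))) (at x)"
      unfolding \<psi>_def H_def using xp[OF xin]
      by (auto intro!: derivative_eq_intros simp: field_simps power2_eq_square)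
    thus "\<exists>y. (\<psi> has_real_derivative y) (at x) \<and> 0 \<le> y" using gx[OF xin] by auto
  qed
  hence G: "sin a / a - sin b / b \<ge> c * (b - a)"
    unfolding \<psi>_def m_def by (simp add: algebra_simps power2_eq_square)
  have ca: "a \<in> {a..b}" "b \<in> {a..b}" using ab by auto
  have c2: "c^2 = (H a / a^2) * (H b / b^2)"
  proof -
    have "c^2 = exp (L a) * exp (L b)" unfolding c_def
      by (simp add: exp_add[symmetric] power2_eq_square)
    thus ?thesis unfolding L_def using Hp[OF ca(1)] Hp[OF ca(2)] xp[OF ca(1)] xp[OF ca(2)] by simp
  qed
  have sq: "sqrt ((sin a - a * cos a) * (sin b - b * cos b)) = a * b * c"
  proof (rule real_sqrt_unique)
    show "(a * b * c)^2 = (sin a - a * cos a) * (sin b - b * cos b)"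
      using c2 ab unfolding H_def by (simp add: power_mult_distrib field_simps)
    show "0 \<le> a * b * c" using ab by (simp add: c_def)
  qed
  have "b * sin a - a * sin b = a * b * (sin a / a - sin b / b)"
    using ab by (simp add: field_simps)
  also have "\<dots> \<ge> a * b * (c * (b - a))" using G ab by (intro mult_left_mono) auto
  finally show ?thesis unfolding sq by (simp add: algebra_simps)
qed

lemma h_pos_pi: fixes x :: real assumes "0 < x" "x \<le> pi" shows "sin x - x * cos x > 0"
proof -
  have "(\<lambda>x. sin x - x * cos x) 0 < (\<lambda>x. sin x - x * cos x) x"
  proof (rule DERIV_pos_imp_increasing_open[of 0 x])
    show "0 < x" by fact
  next
    fix y :: real assume y: "0 < y" "y < x"
    have "((\<lambda>x. sin x - x * cos x) has_real_derivative y * sin y) (at y)"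
      by (auto intro!: derivative_eq_intros simp: algebra_simps)
    moreover have "y * sin y > 0" using y assms sin_gt_zero[of y] by auto
    ultimately show "\<exists>z. ((\<lambda>x. sin x - x * cos x) has_real_derivative z) (at y) \<and> z > 0" by blast
  next
    show "continuous_on {0..x} (\<lambda>x. sin x - x * cos x)" by (intro continuous_intros)
  qed
  thus ?thesis by simp
qed

lemma h_pos: fixes x :: real assumes "0 < x" "x < j32" shows "sin x - x * cos x > 0"
proof (cases "x \<le> pi")
  case True thus ?thesis using h_pos_pi assms by auto
next
  case False
  show ?thesis
  proof (rule ccontr)
    assume "\<not> ?thesis"
    hence n: "sin x - x * cos x \<le> 0" by simp
    have "\<exists>z. pi \<le> z \<and> z \<le> x \<and> (\<lambda>x. sin x - x * cos x) z = 0"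
      apply (rule IVT2)
      using n False h_pos_pi[of pi] by (auto intro!: continuous_intros)
    then obtain z where z: "pi \<le> z" "z \<le> x" "sin z - z * cos z = 0" by auto
    have "z \<in> {x::real. 0 < x \<and> sin x = x * cos x}" proof -
      have "0 < z" using z(1) pi_gt_zero by linarith
      thus ?thesis using z(3) by simp
    qed
    moreover have "bdd_below {x::real. 0 < x \<and> sin x = x * cos x}"
      by (rule bdd_belowI[of _ 0]) auto
    ultimately have "j32 \<le> z" unfolding j32_def by (rule cInf_lower)
    thus False using z assms by auto
  qed
qed

lemma mainlt:
  fixes a b :: real
  assumes "a \<in> {0..j32}" and "b \<in> {0..j32}" and "a < b"
  shows "\<bar>b * sin a - a * sin b\<bar> \<ge>
         \<bar>a - b\<bar> * sqrt ((a * cos a - sin a) * (b * cos b - sin b))"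
proof (cases "a = 0")
  case True thus ?thesis by simp
next
  case False
  hence a0: "0 < a" using assms by auto
  have ha: "sin a - a * cos a > 0" using h_pos[of a] a0 assms by auto
  show ?thesis
  proof (cases "sin b - b * cos b > 0")
    case False
    hence "(a * cos a - sin a) * (b * cos b - sin b) \<le> 0"
      using ha by (simp add: mult_nonpos_nonneg mult_nonneg_nonpos)
    hence "sqrt ((a * cos a - sin a) * (b * cos b - sin b)) \<le> 0" by simp
    hence "\<bar>a - b\<bar> * sqrt ((a * cos a - sin a) * (b * cos b - sin b)) \<le> 0"
      by (simp add: mult_nonneg_nonpos)
    thus ?thesis by linarith
  next
    case True
    have Hp: "sin x - x * cos x > 0" if "a \<le> x" "x \<le> b" for x
    proof (cases "x = b")
      case True thus ?thesis using \<open>sin b - b * cos b > 0\<close> by simp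
    next
      case False thus ?thesis using h_pos[of x] that a0 assms by auto
    qed
    have c: "b * sin a - a * sin b \<ge> (b - a) * sqrt ((sin a - a * cos a) * (sin b - b * cos b))"
      by (rule core[OF a0 assms(3) Hp])
    have e: "(a * cos a - sin a) * (b * cos b - sin b) = (sin a - a * cos a) * (sin b - b * cos b)"
      by (simp add: algebra_simps)
    have "0 \<le> (b - a) * sqrt ((sin a - a * cos a) * (sin b - b * cos b))"
      using assms ha True by simp
    thus ?thesis using c assms(3) unfolding e by simp
  qed
qed

theorem mainTheorem9:
  fixes a b :: real
  assumes "a \<in> {0..j32}" and "b \<in> {0..j32}"
  shows "\<bar>b * sin a - a * sin b\<bar> \<ge>
         \<bar>a - b\<bar> * sqrt ((a * cos a - sin a) * (b * cos b - sin b))"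
proof -
  consider "a < b" | "a = b" | "b < a" by linarith
  thus ?thesis
  proof cases
    case 1 thus ?thesis using mainlt assms by blast
  next
    case 2 thus ?thesis by simp
  next
    case 3
    have "\<bar>a * sin b - b * sin a\<bar> \<ge> \<bar>b - a\<bar> * sqrt ((b * cos b - sin b) * (a * cos a - sin a))"
      using mainlt[OF assms(2,1) 3] .
    thus ?thesis by (simp add: abs_minus_commute mult.commute)
  qed
qed

end
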